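(* For every BIMS channel with capacity $C$, the channel dispersion satisfies $$V^{\rm bec}(C)\le V\le V^{\rm bsc}(C).$$
   Context: A BIMS (binary-input memoryless symmetric) channel is a memoryless channel with input alphabet $\{x_0,x_1\}$, finite output alphabet $\mathcal Y$ and transition probabilities $P_{Y|X}(y|x)$. It is symmetric in Gallager's sense: the columns of the $2\times|\mathcal Y|$ transition matrix (rows indexed by inputs) can be partitioned into submatrices such that, in each submatrix, every row is a permutation of every other row and every column is a permutation of every other column. Inputs are equiprobable and logarithms are base 2. The capacity $C$ is $I(X;Y)$ under equiprobable inputs. For $\rho>-1$, $$F(\rho)=\sum_{x}\tfrac12\sum_{y:\,P_{Y|X}(y|x)>0}P_{Y|X}(y|x)\left(\frac{\tfrac12\sum_{x'}P_{Y|X}(y|x')^{1/(1+\rho)}}{P_{Y|X}(y|x)^{1/(1+\rho)}}\right)^{\rho},$$ and $E_0(\rho)=-\log F(\rho)$. The dispersion is $V=-E_0''(0)$. $V^{\rm bec}(C)$ and $V^{\rm bsc}(C)$ are $-\frac{d^2}{d\rho^2}\bigl(-\log F^{\rm bec}(\rho;C)\bigr)\big|_{\rho=0}$ and $-\frac{d^2}{d\rho^2}\bigl(-\log F^{\rm bsc}(\rho;C)\bigr)\big|_{\rho=0}$, respectively, where $$F^{\rm bec}(\rho;C)=1+(2^{-\rho}-1)C,$$ $$F^{\rm bsc}(\rho;C)=2^{-\rho}\bigl(\varepsilon^{1/(1+\rho)}+(1-\varepsilon)^{1/(1+\rho)}\bigr)^{1+\rho},\qquad \varepsilon=h^{-1}(1-C),$$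 $h$ is the binary entropy function and $h^{-1}$ its inverse on $[0,\tfrac12]$. *)

theory Defs
  imports "HOL-Analysis.Analysis" "HOL-Library.Multiset" "HOL-Library.Disjoint_Sets"
begin

(* A binary-input channel with finite output alphabet 'y: W x y = P_{Y|X}(y|x),
   inputs x0 = False, x1 = True. *)

definition channel :: "(bool \<Rightarrow> 'y::finite \<Rightarrow> real) \<Rightarrow> bool" where
  "channel W \<longleftrightarrow> (\<forall>x y. 0 \<le> W x y) \<and> (\<forall>x. (\<Sum>y\<in>UNIV. W x y) = 1)"

definition gallager_symmetric :: "(bool \<Rightarrow> 'y::finite \<Rightarrow> real) \<Rightarrow> bool" where
  "gallager_symmetric W \<longleftrightarrow>
     (\<exists>P. partition_on (UNIV :: 'y set) P \<and>
        (\<forall>B\<in>P.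
           (\<forall>x x'. image_mset (W x) (mset_set B) = image_mset (W x') (mset_set B)) \<and>
           (\<forall>y\<in>B. \<forall>y'\<in>B. image_mset (\<lambda>x. W x y) (mset_set UNIV)
                              = image_mset (\<lambda>x. W x y') (mset_set UNIV))))"

definition bims :: "(bool \<Rightarrow> 'y::finite \<Rightarrow> real) \<Rightarrow> bool" where
  "bims W \<longleftrightarrow> channel W \<and> gallager_symmetric W"

definition capacity :: "(bool \<Rightarrow> 'y::finite \<Rightarrow> real) \<Rightarrow> real" where
  "capacity W = (\<Sum>x\<in>UNIV. (1/2) * (\<Sum>y\<in>{y. W x y > 0}.
       W x y * log 2 (W x y / ((1/2) * (\<Sum>x'\<in>UNIV. W x' y)))))"

definition gallF :: "(bool \<Rightarrow> 'y::finite \<Rightarrow> real) \<Rightarrow> real \<Rightarrow> real" where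
  "gallF W \<rho> = (\<Sum>x\<in>UNIV. (1/2) * (\<Sum>y\<in>{y. W x y > 0}.
       W x y * (((1/2) * (\<Sum>x'\<in>UNIV. W x' y powr (1 / (1 + \<rho>))))
                 / (W x y powr (1 / (1 + \<rho>)))) powr \<rho>))"

definition E0 :: "(bool \<Rightarrow> 'y::finite \<Rightarrow> real) \<Rightarrow> real \<Rightarrow> real" where
  "E0 W \<rho> = - log 2 (gallF W \<rho>)"

definition dispersion :: "(bool \<Rightarrow> 'y::finite \<Rightarrow> real) \<Rightarrow> real" where
  "dispersion W = - deriv (deriv (E0 W)) 0"

(* binary entropy (base 2); note 0 * log 2 0 = 0 in Isabelle *)
definition bin_entropy :: "real \<Rightarrow> real" where
  "bin_entropy p = - p * log 2 p - (1 - p) * log 2 (1 - p)"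

definition bin_entropy_inv :: "real \<Rightarrow> real" where
  "bin_entropy_inv t = (THE e. 0 \<le> e \<and> e \<le> 1/2 \<and> bin_entropy e = t)"

definition F_bec :: "real \<Rightarrow> real \<Rightarrow> real" where
  "F_bec \<rho> C = 1 + (2 powr (-\<rho>) - 1) * C"

definition F_bsc :: "real \<Rightarrow> real \<Rightarrow> real" where
  "F_bsc \<rho> C = (let \<epsilon> = bin_entropy_inv (1 - C) in
      2 powr (-\<rho>) * (\<epsilon> powr (1 / (1 + \<rho>)) + (1 - \<epsilon>) powr (1 / (1 + \<rho>))) powr (1 + \<rho>))"

definition V_bec :: "real \<Rightarrow> real" where
  "V_bec C = - deriv (deriv (\<lambda>\<rho>. - log 2 (F_bec \<rho> C))) 0"

definition V_bsc :: "real \<Rightarrow> real" where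
  "V_bsc C = - deriv (deriv (\<lambda>\<rho>. - log 2 (F_bsc \<rho> C))) 0"

end

theory Submission
  imports Defs "HOL-Real_Asymp.Real_Asymp"
begin

definition uu :: "real \<Rightarrow> real" where "uu p = p * ln (2*p) + (1-p) * ln (2*(1-p))"
definition ll :: "real \<Rightarrow> real" where "ll p = ln p - ln (1-p)"
definition gg :: "real \<Rightarrow> real" where "gg p = p*(1-p)*(ll p)^2 + (uu p)^2"
definition DD :: "real \<Rightarrow> real" where "DD p = 2 + 2*uu p + (1-2*p)*ll p"

lemma uu_deriv: assumes "0<p" "p<1" shows "(uu has_real_derivative ll p) (at p)"
proof -
  have "((\<lambda>p. p * ln (2*p) + (1-p) * ln (2*(1-p))) has_real_derivative
     (1 * ln (2*p) + p * (2/(2*p)) + (-1) * ln (2*(1-p)) + (1-p) * (-2/(2*(1-p))))) (at p)"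
    using assms by (auto intro!: derivative_eq_intros)
  moreover have "1 * ln (2*p) + p * (2/(2*p)) + (-1) * ln (2*(1-p)) + (1-p) * (-2/(2*(1-p))) = ll p"
  proof -
    have "ln (2*p) = ln 2 + ln p" "ln (2*(1-p)) = ln 2 + ln (1-p)" using assms ln_mult[of 2 p] ln_mult[of 2 "1-p"] by simp_all
    then show ?thesis using assms by (simp add: ll_def)
  qed
  ultimately show ?thesis unfolding uu_def[abs_def] by simp
qed

lemma ll_deriv: assumes "0<p" "p<1" shows "(ll has_real_derivative 1/(p*(1-p))) (at p)"
proof -
  have "((\<lambda>p. ln p - ln (1-p)) has_real_derivative (1/p - (-1)/(1-p))) (at p)"
    using assms by (auto intro!: derivative_eq_intros)
  moreover have "1/p - (-1)/(1-p) = 1/(p*(1-p))" using assms by (simp add: field_simps)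
  ultimately show ?thesis unfolding ll_def[abs_def] by simp
qed

lemma gg_deriv: assumes "0<p" "p<1" shows "(gg has_real_derivative ll p * DD p) (at p)"
proof -
  have "((\<lambda>p. p*(1-p)*(ll p)^2 + (uu p)^2) has_real_derivative
     ((1*(1-p) + p*(-1))*(ll p)^2 + p*(1-p)*(2*ll p * (1/(p*(1-p)))) + 2*uu p * ll p)) (at p)"
    using assms by (auto intro!: derivative_eq_intros uu_deriv ll_deriv)
  moreover have "(1*(1-p) + p*(-1))*(ll p)^2 + p*(1-p)*(2*ll p * (1/(p*(1-p)))) + 2*uu p * ll p = ll p * DD p"
    using assms by (simp add: DD_def field_simps power2_eq_square)
  ultimately show ?thesis unfolding gg_def[abs_def] by simp
qed

lemma DD_deriv: assumes "0<p" "p<1" shows "(DD has_real_derivative (1-2*p)/(p*(1-p))) (at p)"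
proof -
  have "((\<lambda>p. 2 + 2*uu p + (1-2*p)*ll p) has_real_derivative
     (2*ll p + ((-2)*ll p + (1-2*p)*(1/(p*(1-p)))))) (at p)"
    using assms by (auto intro!: derivative_eq_intros uu_deriv ll_deriv)
  moreover have "2*ll p + ((-2)*ll p + (1-2*p)*(1/(p*(1-p)))) = (1-2*p)/(p*(1-p))"
    using assms by (simp add: field_simps)
  ultimately show ?thesis unfolding DD_def[abs_def] by simp
qed

lemma ll_neg: "0<p \<Longrightarrow> p \<le> 1/2 \<Longrightarrow> ll p \<le> 0"
  unfolding ll_def by (simp add: ln_le_cancel_iff)

lemma DD_mono: assumes "0<p" "p\<le>e" "e\<le>1/2" shows "DD p \<le> DD e"
proof (rule DERIV_nonneg_imp_increasing_open[OF assms(2)])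
  fix x assume "p < x" "x < e"
  with assms have "0<x" "x<1" "x \<le> 1/2" by auto
  then show "\<exists>y. (DD has_real_derivative y) (at x) \<and> 0 \<le> y"
    by (intro exI[of _ "(1-2*x)/(x*(1-x))"]) (auto intro!: DD_deriv divide_nonneg_pos)
next
  show "continuous_on {p..e} DD"
    using assms by (intro continuous_at_imp_continuous_on ballI DERIV_isCont[OF DD_deriv]) auto
qed

lemma lim_at0: "((\<lambda>p. gg p - c * uu p) \<longlongrightarrow> gg 0 - c * uu 0) (at_right 0)"
proof -
  have 1: "((\<lambda>p::real. p*(1-p)*(ln p - ln (1-p))^2) \<longlongrightarrow> 0) (at_right 0)" by real_asymp
  have 2: "((\<lambda>p::real. p * ln (2*p) + (1-p) * ln (2*(1-p))) \<longlongrightarrow> ln 2) (at_right 0)" by real_asymp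
  have u0: "uu 0 = ln 2" "gg 0 = (ln 2)^2" by (simp_all add: uu_def gg_def)
  have 3: "(uu \<longlongrightarrow> ln 2) (at_right 0)" using 2 unfolding uu_def[abs_def] .
  have 4: "(gg \<longlongrightarrow> 0 + (ln 2)^2) (at_right 0)" unfolding gg_def[abs_def]
    by (intro tendsto_add tendsto_power 3) (use 1 in \<open>simp add: ll_def\<close>)
  show ?thesis unfolding u0 using 4 3 by (auto intro!: tendsto_diff tendsto_mult)
qed

lemma phi_deriv: assumes "0<x" "x<1"
  shows "((\<lambda>p. gg p - c * uu p) has_real_derivative ll x * (DD x - c)) (at x)"
proof -
  have "((\<lambda>p. gg p - c * uu p) has_real_derivative ll x * DD x - c * ll x) (at x)"
    using assms by (auto intro!: derivative_eq_intros gg_deriv uu_deriv)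
  then show ?thesis by (simp add: algebra_simps)
qed

lemma phi_cont: "continuous_on {0..1/2} (\<lambda>p. gg p - c * uu p)"
proof (rule continuous_on_IccI)
  show "((\<lambda>p. gg p - c * uu p) \<longlongrightarrow> gg 0 - c * uu 0) (at_right 0)" by (rule lim_at0)
  have "isCont (\<lambda>p. gg p - c * uu p) (1/2)" by (rule DERIV_isCont[OF phi_deriv]) auto
  then show "((\<lambda>p. gg p - c * uu p) \<longlongrightarrow> gg (1/2) - c * uu (1/2)) (at_left (1/2))"
    by (simp add: isCont_def filterlim_at_split)
  fix x :: real assume "0<x" "x<1/2"
  then have "isCont (\<lambda>p. gg p - c * uu p) x" by (intro DERIV_isCont[OF phi_deriv]) auto
  then show "((\<lambda>p. gg p - c * uu p) \<longlongrightarrow> gg x - c * uu x) (at x)" by (simp add: isCont_def)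
qed simp

lemma tangent_half: assumes "0<e" "e\<le>1/2" "0\<le>p" "p\<le>1/2"
  shows "gg p - DD e * uu p \<le> gg e - DD e * uu e"
proof (cases "p \<le> e")
  case True
  show ?thesis
  proof (rule DERIV_nonneg_imp_increasing_open[OF True, where f="\<lambda>p. gg p - DD e * uu p"])
    fix x assume x: "p < x" "x < e"
    then have "DD x \<le> DD e" using assms by (intro DD_mono) auto
    moreover have "ll x \<le> 0" using x assms by (intro ll_neg) auto
    ultimately have "0 \<le> ll x * (DD x - DD e)" by (simp add: mult_nonpos_nonpos)
    then show "\<exists>y. ((\<lambda>p. gg p - DD e * uu p) has_real_derivative y) (at x) \<and> 0 \<le> y"
      using x assms by (intro exI[of _ "ll x * (DD x - DD e)"]) (auto intro!: phi_deriv)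
  next
    show "continuous_on {p..e} (\<lambda>p. gg p - DD e * uu p)"
      by (rule continuous_on_subset[OF phi_cont]) (use assms in auto)
  qed
next
  case False
  show ?thesis
  proof (rule DERIV_nonpos_imp_decreasing_open[where f="\<lambda>p. gg p - DD e * uu p"])
    show "e \<le> p" using False by simp
    fix x assume x: "e < x" "x < p"
    then have "DD e \<le> DD x" using assms by (intro DD_mono) auto
    moreover have "ll x \<le> 0" using x assms by (intro ll_neg) auto
    ultimately have "ll x * (DD x - DD e) \<le> 0" by (simp add: mult_nonpos_nonneg)
    then show "\<exists>y. ((\<lambda>p. gg p - DD e * uu p) has_real_derivative y) (at x) \<and> y \<le> 0"
      using x assms by (intro exI[of _ "ll x * (DD x - DD e)"]) (auto intro!: phi_deriv)
  next
    show "continuous_on {e..p} (\<lambda>p. gg p - DD e * uu p)"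
      by (rule continuous_on_subset[OF phi_cont]) (use assms in auto)
  qed
qed

lemma uu_sym: "uu (1-p) = uu p" by (simp add: uu_def algebra_simps)
lemma gg_sym: "gg (1-p) = gg p" by (simp add: gg_def ll_def uu_sym power2_eq_square algebra_simps)

lemma tangent: assumes "0<e" "e\<le>1/2" "0\<le>p" "p\<le>1"
  shows "gg p \<le> gg e + DD e * (uu p - uu e)"
proof (cases "p \<le> 1/2")
  case True then show ?thesis using tangent_half[OF assms(1,2,3) True] by (simp add: algebra_simps)
next
  case False
  then show ?thesis using tangent_half[OF assms(1,2), of "1-p"] assms
    by (simp add: algebra_simps uu_sym gg_sym)
qed

lemma uu_alt: assumes "0\<le>p" "p\<le>1" shows "uu p = ln 2 + p * ln p + (1-p) * ln (1-p)"
proof -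
  have a: "p * ln (2*p) = p * ln 2 + p * ln p"
    using assms by (cases "p=0") (auto simp: ln_mult algebra_simps)
  have b: "(1-p) * ln (2*(1-p)) = (1-p) * ln 2 + (1-p) * ln (1-p)"
  proof (cases "p=1")
    case False
    then have "ln (2*(1-p)) = ln 2 + ln (1-p)" using assms ln_mult[of 2 "1-p"] by simp
    then show ?thesis by (simp add: algebra_simps)
  qed simp
  show ?thesis unfolding uu_def a b by (simp add: algebra_simps)
qed

lemma xlnx_nonpos: "0\<le>(x::real) \<Longrightarrow> x\<le>1 \<Longrightarrow> x * ln x \<le> 0"
proof (cases "x=0")
  case False
  assume "0\<le>x" "x\<le>1"
  then have "ln x \<le> 0" using False by simp
  then show ?thesis using \<open>0\<le>x\<close> by (simp add: mult_nonneg_nonpos)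
qed simp

lemma xlnx_neg: "0<(x::real) \<Longrightarrow> x<1 \<Longrightarrow> x * ln x < 0"
proof -
  assume "0<x" "x<1"
  then have "ln x < 0" by simp
  then show ?thesis using \<open>0<x\<close> by (simp add: mult_pos_neg)
qed

lemma uu_le: "0\<le>p \<Longrightarrow> p\<le>1 \<Longrightarrow> uu p \<le> ln 2"
  using xlnx_nonpos[of p] xlnx_nonpos[of "1-p"] by (simp add: uu_alt)

lemma uu_eq: assumes "0\<le>p" "p\<le>1" "uu p = ln 2" shows "p * (1-p) = 0"
proof (rule ccontr)
  assume "p * (1-p) \<noteq> 0"
  then have "0<p" "p<1" using assms by auto
  then show False using xlnx_neg[of p] xlnx_nonpos[of "1-p"] assms by (simp add: uu_alt)
qed

lemma xln2x: assumes "0\<le>(p::real)" shows "p * ln (2*p) \<ge> p - 1/2"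
proof (cases "p=0")
  case False
  then have p: "0<p" using assms by linarith
  have "ln (1/(2*p)) \<le> 1/(2*p) - 1" by (rule ln_le_minus_one) (use p in simp)
  then have "- ln (2*p) \<le> 1/(2*p) - 1" using p by (simp add: ln_div)
  then have "p * (- ln (2*p)) \<le> p * (1/(2*p) - 1)" using p by (intro mult_left_mono) auto
  moreover have "p * (1/(2*p) - 1) = 1/2 - p" using p by (simp add: field_simps)
  ultimately show ?thesis by (simp add: algebra_simps)
qed simp

lemma uu_nonneg: "0\<le>p \<Longrightarrow> p\<le>1 \<Longrightarrow> 0 \<le> uu p"
  using xln2x[of p] xln2x[of "1-p"] by (simp add: uu_def)

lemma uu0: "uu 0 = ln 2" and gg0: "gg 0 = (ln 2)^2" and uuh: "uu (1/2) = 0" and ggh: "gg (1/2) = 0"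
  by (simp_all add: uu_def gg_def ll_def)

lemma lower_half: assumes "0\<le>p" "p\<le>1/2" shows "ln 2 * uu p \<le> gg p"
proof (cases "p=0")
  case True then show ?thesis by (simp add: uu0 gg0 power2_eq_square)
next
  case False
  then have p: "0<p" using assms by simp
  have t1: "gg 0 \<le> gg p + DD p * (uu 0 - uu p)" by (rule tangent) (use p assms in auto)
  have t2: "gg (1/2) \<le> gg p + DD p * (uu (1/2) - uu p)" by (rule tangent) (use p assms in auto)
  have v: "0 \<le> uu p" "uu p \<le> ln 2" using assms by (auto intro!: uu_nonneg uu_le)
  have l2: "ln (2::real) > 0" by simp
  let ?v = "uu p" and ?g = "gg p" and ?D = "DD p"
  have A: "(ln 2)^2 \<le> ?g + ?D * (ln 2 - ?v)" using t1 by (simp add: uu0 gg0)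
  have B: "0 \<le> ?g - ?D * ?v" using t2 by (simp add: uuh ggh)
  have "?v * (ln 2)^2 \<le> ?v * (?g + ?D * (ln 2 - ?v))" using A v by (intro mult_left_mono) auto
  moreover have "0 \<le> (ln 2 - ?v) * (?g - ?D * ?v)" using B v by simp
  moreover have "?v * (?g + ?D * (ln 2 - ?v)) + (ln 2 - ?v) * (?g - ?D * ?v) = ln 2 * ?g"
    by (simp add: algebra_simps)
  moreover have "?v * (ln 2)^2 = ln 2 * (ln 2 * ?v)" by (simp add: power2_eq_square)
  ultimately have "ln 2 * (ln 2 * ?v) \<le> ln 2 * ?g"
    by linarith
  then show ?thesis using l2 by (simp add: mult_le_cancel_left)
qed

lemma lower: assumes "0\<le>p" "p\<le>1" shows "ln 2 * uu p \<le> gg p"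
proof (cases "p \<le> 1/2")
  case True then show ?thesis using lower_half assms by auto
next
  case False then show ?thesis using lower_half[of "1-p"] assms by (simp add: uu_sym gg_sym)
qed


definition cc :: "real \<Rightarrow> real \<Rightarrow> real \<Rightarrow> real" where
  "cc a b \<rho> = ((a powr (1/(1+\<rho>)) + b powr (1/(1+\<rho>)))/2) powr (1+\<rho>)"
definition KK :: "real \<Rightarrow> real \<Rightarrow> real" where
  "KK a b = a * ln (2*a/(a+b)) + b * ln (2*b/(a+b))"
definition c2v :: "real \<Rightarrow> real \<Rightarrow> real" where
  "c2v a b = (a*b*(ln a - ln b)^2 + (KK a b)^2)/(2*(a+b))"

lemma aux1: "(x::real) \<noteq> 0 \<Longrightarrow> S > 0 \<Longrightarrow> 1*L + x*((-T/x^2/2)/(S/2)) = L - T/(x*S)"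
  by (simp add: field_simps power2_eq_square)
lemma aux2: "(s::real) > 0 \<Longrightarrow> (- t / (1+0)^2 / 2) / (s / 2) -
     (((- r / (1+0)^2) * ((1+0) * s) - t * (1 * s + (1+0) * (- t / (1+0)^2))) / ((1+0) * s)^2)
     = (r * s - t^2) / s^2"
  by (simp add: field_simps power2_eq_square)

lemma cc0: "0\<le>a \<Longrightarrow> 0\<le>b \<Longrightarrow> cc a b 0 = (a+b)/2"
  by (simp add: cc_def)

context
  fixes A B :: real
begin
definition "SS \<rho> = exp (A/(1+\<rho>)) + exp (B/(1+\<rho>))"
definition "TT \<rho> = A*exp (A/(1+\<rho>)) + B*exp (B/(1+\<rho>))"
definition "RR \<rho> = A^2*exp (A/(1+\<rho>)) + B^2*exp (B/(1+\<rho>))"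
definition "EE \<rho> = exp ((1+\<rho>) * ln (SS \<rho> / 2))"
definition "PS \<rho> = ln (SS \<rho> / 2) - TT \<rho> / ((1+\<rho>) * SS \<rho>)"

lemma SS_pos: "SS \<rho> > 0" by (simp add: SS_def add_pos_pos)

lemma SS_deriv: "\<rho> > -1 \<Longrightarrow> (SS has_real_derivative - TT \<rho> / (1+\<rho>)^2) (at \<rho>)"
  unfolding SS_def[abs_def] TT_def
  apply (rule derivative_eq_intros refl | simp)+
  apply (simp add: field_simps power2_eq_square add_divide_distrib diff_divide_distrib)
  done

lemma TT_deriv: "\<rho> > -1 \<Longrightarrow> (TT has_real_derivative - RR \<rho> / (1+\<rho>)^2) (at \<rho>)"
  unfolding TT_def[abs_def] RR_def
  apply (rule derivative_eq_intros refl | simp)+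
  apply (simp add: field_simps power2_eq_square add_divide_distrib diff_divide_distrib)
  done

lemma EE_deriv: "\<rho> > -1 \<Longrightarrow> (EE has_real_derivative EE \<rho> * PS \<rho>) (at \<rho>)"
proof -
  assume r: "\<rho> > -1"
  have "(EE has_real_derivative EE \<rho> * (1 * ln (SS \<rho> / 2) + (1+\<rho>) * ((- TT \<rho> / (1+\<rho>)^2 / 2) / (SS \<rho> / 2)))) (at \<rho>)"
    unfolding EE_def[abs_def] using r SS_pos[of \<rho>]
    by (auto intro!: derivative_eq_intros SS_deriv simp: ac_simps)
  moreover have "1 * ln (SS \<rho> / 2) + (1+\<rho>) * ((- TT \<rho> / (1+\<rho>)^2 / 2) / (SS \<rho> / 2)) = PS \<rho>"
  proof -
    have "1+\<rho> \<noteq> 0" using r by simp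
    then show ?thesis unfolding PS_def by (rule aux1[OF _ SS_pos])
  qed
  ultimately show ?thesis by simp
qed

lemma PS_deriv0: "(PS has_real_derivative (RR 0 * SS 0 - (TT 0)^2) / (SS 0)^2) (at 0)"
proof -
  have "(PS has_real_derivative ((- TT 0 / (1+0)^2 / 2) / (SS 0 / 2) -
     (((- RR 0 / (1+0)^2) * ((1+0) * SS 0) - TT 0 * (1 * SS 0 + (1+0) * (- TT 0 / (1+0)^2))) / ((1+0) * SS 0)^2))) (at 0)"
    unfolding PS_def[abs_def] using SS_pos[of 0]
    by (auto intro!: derivative_eq_intros SS_deriv TT_deriv simp: power2_eq_square)
  moreover have "(- TT 0 / (1+0)^2 / 2) / (SS 0 / 2) -
     (((- RR 0 / (1+0)^2) * ((1+0) * SS 0) - TT 0 * (1 * SS 0 + (1+0) * (- TT 0 / (1+0)^2))) / ((1+0) * SS 0)^2)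
     = (RR 0 * SS 0 - (TT 0)^2) / (SS 0)^2"
    by (rule aux2[OF SS_pos])
  ultimately show ?thesis by simp
qed

end


lemma aux3: "(n::real) > 0 \<Longrightarrow> (n/2*P)*P + n/2*(Z/n^2) = (Z + (-n*P)^2)/(2*n)"
  by (simp add: field_simps power2_eq_square)

lemma cc_pos_eq: assumes "0<a" "0<b" "\<rho> > -1" shows "cc a b \<rho> = EE (ln a) (ln b) \<rho>"
proof -
  have "a powr (1/(1+\<rho>)) = exp (ln a/(1+\<rho>))" "b powr (1/(1+\<rho>)) = exp (ln b/(1+\<rho>))"
    using assms by (simp_all add: powr_def)
  then have "cc a b \<rho> = (SS (ln a) (ln b) \<rho> / 2) powr (1+\<rho>)" by (simp add: cc_def SS_def)
  also have "\<dots> = EE (ln a) (ln b) \<rho>" using SS_pos[of "ln a" "ln b" \<rho>]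
    by (simp add: powr_def EE_def)
  finally show ?thesis .
qed

lemma col_pos: assumes a: "0<a" and b: "0<b"
  shows "\<exists>c1. (\<forall>\<rho>\<in>ball 0 (1/2). (cc a b has_real_derivative c1 \<rho>) (at \<rho>)) \<and>
             (c1 has_real_derivative c2v a b) (at 0) \<and> c1 0 = - KK a b / 2"
proof -
  let ?A = "ln a" and ?B = "ln b"
  define c1 where "c1 = (\<lambda>\<rho>. EE ?A ?B \<rho> * PS ?A ?B \<rho>)"
  have d1: "(cc a b has_real_derivative c1 \<rho>) (at \<rho>)" if "\<rho> \<in> ball 0 (1/2)" for \<rho>
  proof -
    have r: "\<rho> > -1" using that by (auto simp: dist_real_def)
    show ?thesis
      apply (rule has_field_derivative_transform_within_open[OF _ open_greaterThan, of _ _ _ "-1"])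
      using r cc_pos_eq[OF a b] by (auto simp: c1_def intro!: EE_deriv)
  qed
  let ?n = "a+b"
  have n: "?n > 0" using a b by simp
  have S0: "SS ?A ?B 0 = ?n" using a b by (simp add: SS_def)
  have T0: "TT ?A ?B 0 = a * ln a + b * ln b" using a b by (simp add: TT_def)
  have R0: "RR ?A ?B 0 = a * (ln a)^2 + b * (ln b)^2" using a b by (simp add: RR_def)
  have E0: "EE ?A ?B 0 = ?n/2" using n by (simp add: EE_def S0)
  have P0: "PS ?A ?B 0 = ln (?n/2) - (a * ln a + b * ln b)/?n" by (simp add: PS_def S0 T0)
  have lnd: "ln (2*x/?n) = ln 2 + ln x - ln ?n" if "x>0" for x
    using that n by (simp add: ln_div ln_mult)
  have K: "KK a b = - ?n * PS ?A ?B 0"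
  proof -
    have l2: "ln (?n/2) = ln ?n - ln 2" using n by (simp add: ln_div)
    show ?thesis unfolding KK_def P0 lnd[OF a] lnd[OF b] l2 using n
      by (simp add: field_simps)
  qed
  have c10: "c1 0 = - KK a b / 2" unfolding c1_def E0 K by (simp add: algebra_simps)
  have "(c1 has_real_derivative (EE ?A ?B 0 * PS ?A ?B 0) * PS ?A ?B 0 + EE ?A ?B 0 * ((RR ?A ?B 0 * SS ?A ?B 0 - (TT ?A ?B 0)^2) / (SS ?A ?B 0)^2)) (at 0)"
    unfolding c1_def by (auto intro!: derivative_eq_intros EE_deriv PS_deriv0)
  moreover have "(EE ?A ?B 0 * PS ?A ?B 0) * PS ?A ?B 0 + EE ?A ?B 0 * ((RR ?A ?B 0 * SS ?A ?B 0 - (TT ?A ?B 0)^2) / (SS ?A ?B 0)^2) = c2v a b"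
  proof -
    have X: "RR ?A ?B 0 * SS ?A ?B 0 - (TT ?A ?B 0)^2 = a*b*(ln a - ln b)^2"
      unfolding R0 S0 T0 by (simp add: algebra_simps power2_eq_square)
    show ?thesis unfolding X unfolding c2v_def K E0 S0 by (rule aux3[OF n])
  qed
  ultimately have "(c1 has_real_derivative c2v a b) (at 0)" by simp
  then show ?thesis using d1 c10 by blast
qed

lemma cc_zero_eq: assumes b: "0<b" and r: "\<rho> > -1" shows "cc 0 b \<rho> = b/2 * exp (- \<rho> * ln 2)"
proof -
  have "(b powr (1/(1+\<rho>))) powr (1+\<rho>) = b" using r b by (simp add: powr_powr)
  moreover have "(2::real) powr (1+\<rho>) = 2 * exp (\<rho> * ln 2)" by (simp add: powr_def distrib_right exp_add)
  ultimately have "cc 0 b \<rho> = b / (2 * exp (\<rho> * ln 2))" by (simp add: cc_def powr_divide)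
  then show ?thesis by (simp add: exp_minus field_simps)
qed

lemma col_zero: assumes b: "0<b"
  shows "\<exists>c1. (\<forall>\<rho>\<in>ball 0 (1/2). (cc 0 b has_real_derivative c1 \<rho>) (at \<rho>)) \<and>
             (c1 has_real_derivative c2v 0 b) (at 0) \<and> c1 0 = - KK 0 b / 2"
proof -
  define c1 where "c1 = (\<lambda>\<rho>::real. b/2 * (exp (- \<rho> * ln 2) * (- ln 2)))"
  have d1: "(cc 0 b has_real_derivative c1 \<rho>) (at \<rho>)" if "\<rho> \<in> ball 0 (1/2)" for \<rho>
  proof -
    have r: "\<rho> > -1" using that by (auto simp: dist_real_def)
    show ?thesis
      apply (rule has_field_derivative_transform_within_open[where f="\<lambda>\<rho>. b/2 * exp (- \<rho> * ln 2)" and S="{-1<..}"])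
      using r cc_zero_eq[OF b] by (auto simp: c1_def intro!: derivative_eq_intros)
  qed
  have K: "KK 0 b = b * ln 2" using b by (simp add: KK_def)
  have "(c1 has_real_derivative b/2 * (exp (- 0 * ln 2) * (- ln 2) * (- ln 2))) (at 0)"
    unfolding c1_def by (auto intro!: derivative_eq_intros)
  moreover have "b/2 * (exp (- 0 * ln 2) * (- ln 2) * (- ln 2)) = c2v 0 b"
    using b by (simp add: c2v_def K power2_eq_square)
  ultimately have "(c1 has_real_derivative c2v 0 b) (at 0)" by simp
  moreover have "c1 0 = - KK 0 b / 2" by (simp add: c1_def K)
  ultimately show ?thesis using d1 by blast
qed

lemma cc_comm: "cc a b = cc b a" by (auto simp: cc_def add.commute)
lemma KK_comm: "KK a b = KK b a" by (auto simp: KK_def add.commute)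
lemma c2v_comm: "c2v a b = c2v b a" by (auto simp: c2v_def KK_comm add.commute power2_eq_square algebra_simps)

lemma col: assumes "0\<le>a" "0\<le>b"
  shows "\<exists>c1. (\<forall>\<rho>\<in>ball 0 (1/2). (cc a b has_real_derivative c1 \<rho>) (at \<rho>)) \<and>
             (c1 has_real_derivative c2v a b) (at 0) \<and> c1 0 = - KK a b / 2"
proof (cases "a = 0")
  case True
  show ?thesis
  proof (cases "b = 0")
    case True
    have "cc 0 0 = (\<lambda>_. 0)" by (auto simp: cc_def)
    moreover have "c2v 0 0 = 0" "KK 0 0 = 0" by (simp_all add: c2v_def KK_def)
    ultimately show ?thesis using \<open>a=0\<close> True by (intro exI[of _ "\<lambda>_. 0"]) auto
  next
    case False then show ?thesis using col_zero[of b] assms True by auto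
  qed
next
  case False
  show ?thesis
  proof (cases "b = 0")
    case True
    then show ?thesis using col_zero[of a] assms False by (auto simp: cc_comm KK_comm c2v_comm)
  next
    case False then show ?thesis using col_pos[of a b] assms \<open>a\<noteq>0\<close> by auto
  qed
qed


lemma aux4: "(l::real) > 0 \<Longrightarrow> (a*(1*l) - b*(b*l))/(1*l)^2 = (a - b^2)/l"
  by (simp add: field_simps power2_eq_square)

lemma dlog: fixes F F1 G :: "real \<Rightarrow> real"
  assumes r: "r>0" and dF: "\<forall>x\<in>ball 0 r. (F has_real_derivative F1 x) (at x)"
    and dF1: "(F1 has_real_derivative F2) (at 0)" and F0: "F 0 = 1"
    and G: "\<forall>x\<in>ball 0 r. G x = - log 2 (F x)"
  shows "- deriv (deriv G) 0 = (F2 - (F1 0)^2)/ln 2"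
proof -
  have "isCont F 0" using dF r by (intro DERIV_isCont) auto
  then obtain d where d: "d>0" "\<forall>x. dist x 0 < d \<longrightarrow> dist (F x) (F 0) < 1/2"
    unfolding continuous_at_eps_delta by (metis half_gt_zero_iff zero_less_one)
  define r' where "r' = min r d"
  have r': "r' > 0" "r' \<le> r" using r d by (auto simp: r'_def)
  have Fpos: "F x > 0" if "x \<in> ball 0 r'" for x
  proof -
    have "\<bar>F x - 1\<bar> < 1/2" using d(2)[rule_format, of x] that F0 by (auto simp: r'_def dist_real_def)
    then show ?thesis by linarith
  qed
  define D1 where "D1 = (\<lambda>x. - (F1 x / (F x * ln 2)))"
  have dG: "(G has_real_derivative D1 x) (at x)" if x: "x \<in> ball 0 r'" for x
  proof -
    have xr: "x \<in> ball 0 r" using x r' by auto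
    have "((\<lambda>y. log 2 (F y)) has_real_derivative (1 / (ln 2 * F x) * F1 x)) (at x)"
      by (rule DERIV_chain2[where g=F, OF DERIV_log[OF Fpos[OF x], of 2]]) (use dF xr in blast)
    then have "((\<lambda>y. - log 2 (F y)) has_real_derivative - (1 / (ln 2 * F x) * F1 x)) (at x)"
      by (rule DERIV_minus)
    then have "((\<lambda>y. - log 2 (F y)) has_real_derivative D1 x) (at x)"
      by (simp add: D1_def mult.commute)
    then show ?thesis
      by (rule has_field_derivative_transform_within_open[where S="ball 0 r"]) (use xr G in auto)
  qed
  have dd: "D1 x = deriv G x" if "x \<in> ball 0 r'" for x using dG[OF that] by (rule DERIV_imp_deriv[symmetric])
  have dD1: "(D1 has_real_derivative - ((F2 * (F 0 * ln 2) - F1 0 * (F1 0 * ln 2)) / (F 0 * ln 2)^2)) (at 0)"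
  proof -
    have "(F has_real_derivative F1 0) (at 0)" using dF r by auto
    then have "((\<lambda>x. F x * ln 2) has_real_derivative F1 0 * ln 2) (at 0)" by (rule DERIV_cmult_right)
    then have "((\<lambda>x. F1 x / (F x * ln 2)) has_real_derivative (F2 * (F 0 * ln 2) - F1 0 * (F1 0 * ln 2)) / ((F 0 * ln 2) * (F 0 * ln 2))) (at 0)"
      by (rule DERIV_divide[OF dF1]) (use F0 in simp)
    then show ?thesis unfolding D1_def power2_eq_square by (rule DERIV_minus)
  qed
  have "(deriv G has_real_derivative - ((F2 * (F 0 * ln 2) - F1 0 * (F1 0 * ln 2)) / (F 0 * ln 2)^2)) (at 0)"
    by (rule has_field_derivative_transform_within_open[OF dD1 open_ball, of 0 r']) (use r'(1) dd in auto)
  then have "deriv (deriv G) 0 = - ((F2 * (F 0 * ln 2) - F1 0 * (F1 0 * ln 2)) / (F 0 * ln 2)^2)"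
    by (rule DERIV_imp_deriv)
  moreover have "(F2 * (1 * ln 2) - F1 0 * (F1 0 * ln 2)) / (1 * ln 2)^2 = (F2 - (F1 0)^2) / ln 2"
    by (rule aux4) simp
  ultimately show ?thesis using F0 by simp
qed


lemma col_rel: assumes a: "0\<le>a" and b: "0\<le>b" and n: "a+b>0"
  shows "KK a b = (a+b) * uu (a/(a+b))" "c2v a b = (a+b)/2 * gg (a/(a+b))"
proof -
  let ?n = "a+b" and ?p = "a/(a+b)"
  have q: "1 - ?p = b/?n" using n by (simp add: field_simps)
  have u: "2 * ?p = 2*a/?n" "2 * (1-?p) = 2*b/?n" using q by simp_all
  have na: "?n * ?p = a" "?n * (1 - ?p) = b" using n q by simp_all
  have "?n * uu ?p = (?n * ?p) * ln (2 * ?p) + (?n * (1-?p)) * ln (2 * (1-?p))"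
    unfolding uu_def by (simp add: algebra_simps)
  also have "\<dots> = KK a b" unfolding na u KK_def by simp
  finally show K: "KK a b = ?n * uu ?p" by simp
  have "?n^2 * (?p*(1-?p)) = (?n * ?p) * (?n * (1-?p))" by (simp only: power2_eq_square mult_ac)
  then have ab: "a*b = ?n^2 * (?p*(1-?p))" unfolding na by simp
  have L: "a*b*(ln a - ln b)^2 = ?n^2 * (?p*(1-?p)*(ll ?p)^2)"
  proof (cases "a=0 \<or> b=0")
    case True then show ?thesis using n by (auto simp: q)
  next
    case False
    then have "a>0" "b>0" using a b by auto
    then have "ln ?p = ln a - ln ?n" "ln (1-?p) = ln b - ln ?n" unfolding q by (simp_all add: ln_div)
    then have lleq: "ll ?p = ln a - ln b" by (simp add: ll_def)
    show ?thesis unfolding ab lleq by (simp only: mult_ac)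
  qed
  show "c2v a b = ?n/2 * gg ?p"
    unfolding c2v_def L K gg_def using n by (simp add: field_simps power2_eq_square)
qed

lemma term_eq: assumes w: "0\<le>(w::real)" and m: "0\<le>m" and r: "\<rho> > -1"
  shows "(if 0 < w then w * (m / w powr (1/(1+\<rho>))) powr \<rho> else 0) = w powr (1/(1+\<rho>)) * m powr \<rho>"
proof (cases "w = 0")
  case False
  then have wp: "w>0" using w by simp
  have X: "(m / w powr (1/(1+\<rho>))) powr \<rho> = m powr \<rho> / w powr (1/(1+\<rho>) * \<rho>)"
    using m wp by (simp add: powr_divide powr_powr)
  have Y: "w / w powr (1/(1+\<rho>) * \<rho>) = w powr (1/(1+\<rho>))"
  proof -
    have "w / w powr (1/(1+\<rho>) * \<rho>) = w powr (1 - 1/(1+\<rho>) * \<rho>)" using wp by (simp add: powr_diff)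
    moreover have "1 - 1/(1+\<rho>) * \<rho> = 1/(1+\<rho>)" using r by (simp add: field_simps)
    ultimately show ?thesis by simp
  qed
  have "w * (m powr \<rho> / w powr (1/(1+\<rho>) * \<rho>)) = (w / w powr (1/(1+\<rho>) * \<rho>)) * m powr \<rho>"
    by simp
  then show ?thesis using wp unfolding X Y by simp
qed simp

lemma gallF_eq: fixes W :: "bool \<Rightarrow> 'y::finite \<Rightarrow> real"
  assumes W: "\<And>x y. 0 \<le> W x y" and r: "\<rho> > -1"
  shows "gallF W \<rho> = (\<Sum>y\<in>UNIV. cc (W False y) (W True y) \<rho>)"
proof -
  define s where "s = 1/(1+\<rho>)"
  define m where "m y = (1/2) * (\<Sum>x'\<in>UNIV. W x' y powr s)" for y
  have m0: "0 \<le> m y" for y by (auto simp: m_def intro!: sum_nonneg)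
  have inner: "(\<Sum>y\<in>{y. W x y > 0}. W x y * (m y / (W x y powr s)) powr \<rho>)
      = (\<Sum>y\<in>UNIV. W x y powr s * m y powr \<rho>)" for x
  proof -
    have "(\<Sum>y\<in>{y. W x y > 0}. W x y * (m y / (W x y powr s)) powr \<rho>)
       = (\<Sum>y\<in>UNIV. if 0 < W x y then W x y * (m y / (W x y powr s)) powr \<rho> else 0)"
      by (rule sum.mono_neutral_cong_left) auto
    also have "\<dots> = (\<Sum>y\<in>UNIV. W x y powr s * m y powr \<rho>)"
      unfolding s_def by (rule sum.cong[OF refl], rule term_eq[OF W m0 r])
    finally show ?thesis .
  qed
  have "gallF W \<rho> = (\<Sum>x\<in>UNIV. (1/2) * (\<Sum>y\<in>{y. W x y > 0}. W x y * (m y / (W x y powr s)) powr \<rho>))"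
    unfolding gallF_def s_def[symmetric] m_def[symmetric] ..
  also have "\<dots> = (\<Sum>x\<in>UNIV. (1/2) * (\<Sum>y\<in>UNIV. W x y powr s * m y powr \<rho>))"
    by (simp only: inner)
  also have "\<dots> = (\<Sum>y\<in>UNIV. \<Sum>x\<in>UNIV. (1/2) * (W x y powr s * m y powr \<rho>))"
    by (simp only: sum_distrib_left) (rule sum.swap)
  also have "\<dots> = (\<Sum>y\<in>UNIV. m y * m y powr \<rho>)"
    by (rule sum.cong[OF refl]) (simp add: m_def sum_distrib_left sum_distrib_right mult.assoc)
  also have "\<dots> = (\<Sum>y\<in>UNIV. m y powr (1+\<rho>))"
  proof (rule sum.cong[OF refl])
    fix y show "m y * m y powr \<rho> = m y powr (1+\<rho>)"
      using m0[of y] by (cases "m y = 0") (auto simp: powr_add)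
  qed
  also have "\<dots> = (\<Sum>y\<in>UNIV. cc (W False y) (W True y) \<rho>)"
    by (rule sum.cong[OF refl]) (simp add: m_def cc_def s_def UNIV_bool add.commute)
  finally show ?thesis .
qed

lemma capacity_eq: fixes W :: "bool \<Rightarrow> 'y::finite \<Rightarrow> real"
  assumes W: "\<And>x y. 0 \<le> W x y"
  shows "capacity W = (\<Sum>y\<in>UNIV. KK (W False y) (W True y)) / (2 * ln 2)"
proof -
  define n where "n y = W False y + W True y" for y
  have inner: "(\<Sum>y\<in>{y. W x y > 0}. W x y * log 2 (W x y / ((1/2) * (\<Sum>x'\<in>UNIV. W x' y))))
      = (\<Sum>y\<in>UNIV. W x y * ln (2 * W x y / n y) / ln 2)" for x
  proof -
    have "(\<Sum>y\<in>{y. W x y > 0}. W x y * log 2 (W x y / ((1/2) * (\<Sum>x'\<in>UNIV. W x' y))))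
       = (\<Sum>y\<in>UNIV. W x y * log 2 (W x y / ((1/2) * (\<Sum>x'\<in>UNIV. W x' y))))"
      by (rule sum.mono_neutral_left) (use W in \<open>auto simp: order.order_iff_strict\<close>)
    also have "\<dots> = (\<Sum>y\<in>UNIV. W x y * ln (2 * W x y / n y) / ln 2)"
      by (rule sum.cong[OF refl]) (simp add: log_def n_def UNIV_bool add.commute mult.commute)
    finally show ?thesis .
  qed
  have "capacity W = (\<Sum>x\<in>UNIV. (1/2) * (\<Sum>y\<in>UNIV. W x y * ln (2 * W x y / n y) / ln 2))"
    unfolding capacity_def by (simp only: inner)
  also have "\<dots> = (\<Sum>y\<in>UNIV. \<Sum>x\<in>UNIV. (1/2) * (W x y * ln (2 * W x y / n y) / ln 2))"
    by (simp only: sum_distrib_left) (rule sum.swap)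
  also have "\<dots> = (\<Sum>y\<in>UNIV. KK (W False y) (W True y) / (2 * ln 2))"
    by (rule sum.cong[OF refl]) (simp add: KK_def n_def UNIV_bool add_divide_distrib)
  also have "\<dots> = (\<Sum>y\<in>UNIV. KK (W False y) (W True y)) / (2 * ln 2)"
    by (simp add: sum_divide_distrib)
  finally show ?thesis .
qed

lemma Fbsc_eq: "F_bsc \<rho> C = 2 * cc (bin_entropy_inv (1-C)) (1 - bin_entropy_inv (1-C)) \<rho>"
proof -
  define e where "e = bin_entropy_inv (1-C)"
  define X where "X = e powr (1/(1+\<rho>)) + (1-e) powr (1/(1+\<rho>))"
  have X0: "X \<ge> 0" by (simp add: X_def)
  have "cc e (1-e) \<rho> = X powr (1+\<rho>) / (2 * 2 powr \<rho>)"
    unfolding cc_def X_def[symmetric] using X0 by (simp add: powr_divide powr_add)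
  moreover have "F_bsc \<rho> C = X powr (1+\<rho>) / 2 powr \<rho>"
    unfolding F_bsc_def Let_def e_def[symmetric] X_def[symmetric] by (simp add: powr_minus_divide)
  ultimately show ?thesis unfolding e_def[symmetric] by simp
qed


lemma uu_cont: "continuous_on {0..1/2} uu"
proof -
  have "continuous_on {0..1/2} (\<lambda>p. (gg p - 0 * uu p) - (gg p - 1 * uu p))"
    by (intro continuous_on_diff phi_cont)
  then show ?thesis by simp
qed

lemma ll_strict: "0<t \<Longrightarrow> t<1/2 \<Longrightarrow> ll t < 0"
  unfolding ll_def by simp

lemma uu_strict: assumes "0\<le>x" "x<y" "y\<le>1/2" shows "uu y < uu x"
proof -
  have "(\<lambda>p. - uu p) x < (\<lambda>p. - uu p) y"
  proof (rule DERIV_pos_imp_increasing_open[OF assms(2)])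
    fix t assume t: "x<t" "t<y"
    then have "(uu has_real_derivative ll t) (at t)" using assms by (intro uu_deriv) auto
    then have "((\<lambda>p. - uu p) has_real_derivative - ll t) (at t)" by (rule DERIV_minus)
    moreover have "ll t < 0" using t assms by (intro ll_strict) auto
    ultimately show "\<exists>d. ((\<lambda>p. - uu p) has_real_derivative d) (at t) \<and> 0 < d" by force
  next
    show "continuous_on {x..y} (\<lambda>p. - uu p)"
      by (intro continuous_on_minus continuous_on_subset[OF uu_cont]) (use assms in auto)
  qed
  then show ?thesis by simp
qed

lemma bin_entropy_uu: assumes "0\<le>p" "p\<le>1" shows "bin_entropy p = 1 - uu p / ln 2"
  using assms by (simp add: bin_entropy_def uu_alt log_def field_simps)

lemma bei: assumes "0\<le>C" "C\<le>1"
  shows "0 \<le> bin_entropy_inv (1-C) \<and> bin_entropy_inv (1-C) \<le> 1/2 \<and> uu (bin_entropy_inv (1-C)) = C * ln 2"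
proof -
  have eqv: "bin_entropy e = 1 - C \<longleftrightarrow> uu e = C * ln 2" if "0\<le>e" "e\<le>1/2" for e
    using that by (auto simp: bin_entropy_uu field_simps)
  have "\<exists>e. 0 \<le> e \<and> e \<le> 1/2 \<and> (\<lambda>p. - uu p) e = - (C * ln 2)"
  proof (rule IVT')
    show "(\<lambda>p. - uu p) 0 \<le> - (C * ln 2)" using assms by (simp add: uu0)
    show "- (C * ln 2) \<le> (\<lambda>p. - uu p) (1/2)" using assms by (simp add: uuh)
    show "continuous_on {0..1/2} (\<lambda>p. - uu p)" by (intro continuous_on_minus uu_cont)
  qed simp
  then obtain e where e: "0 \<le> e" "e \<le> 1/2" "uu e = C * ln 2" by auto
  have uniq: "e' = e" if "0 \<le> e'" "e' \<le> 1/2" "uu e' = C * ln 2" for e'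
  proof (rule ccontr)
    assume "e' \<noteq> e"
    then consider "e' < e" | "e < e'" by linarith
    then show False
      using uu_strict[of e' e] uu_strict[of e e'] that e by cases auto
  qed
  have "bin_entropy_inv (1-C) = e"
    unfolding bin_entropy_inv_def
  proof (rule the_equality)
    show "0 \<le> e \<and> e \<le> 1/2 \<and> bin_entropy e = 1 - C" using e eqv by auto
    fix e' assume "0 \<le> e' \<and> e' \<le> 1/2 \<and> bin_entropy e' = 1 - C"
    then show "e' = e" using uniq eqv by auto
  qed
  then show ?thesis using e by simp
qed


lemma col_facts: assumes a: "0\<le>a" and b: "0\<le>b"
  shows "0 \<le> KK a b" "KK a b \<le> (a+b)*ln 2" "ln 2 * KK a b / 2 \<le> c2v a b"
    "0<e \<Longrightarrow> e \<le> 1/2 \<Longrightarrow> c2v a b \<le> (a+b)/2 * gg e + DD e * (KK a b/2 - (a+b)/2 * uu e)"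
    "KK a b = (a+b)*ln 2 \<Longrightarrow> c2v a b = (a+b)/2 * gg 0"
proof -
  consider (z) "a+b = 0" | (p) "a+b > 0" using a b by linarith
  note cs = this
  have z0: "a = 0" "b = 0" if "a+b = 0" using that a b by linarith+
  let ?p = "a/(a+b)"
  have pr: "0 \<le> ?p" "?p \<le> 1" if "a+b>0"
  proof -
    show "0 \<le> ?p" using a b by simp
    show "?p \<le> 1" using that b by (simp add: divide_le_eq)
  qed
  show "0 \<le> KK a b"
    using cs
  proof cases
    case z then show ?thesis using z0[OF z] by (simp add: KK_def)
  next
    case p
    have "0 \<le> uu ?p" by (rule uu_nonneg) (use pr p in auto)
    then show ?thesis unfolding col_rel(1)[OF a b p] using p by simp
  qed
  show "KK a b \<le> (a+b)*ln 2"
    using cs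
  proof cases
    case z then show ?thesis using z0[OF z] by (simp add: KK_def)
  next
    case p
    have "uu ?p \<le> ln 2" by (rule uu_le) (use pr p in auto)
    then show ?thesis unfolding col_rel(1)[OF a b p] using p by (simp add: mult_left_mono)
  qed
  show "ln 2 * KK a b / 2 \<le> c2v a b"
    using cs
  proof cases
    case z then show ?thesis using z0[OF z] by (simp add: KK_def c2v_def)
  next
    case p
    have "ln 2 * uu ?p \<le> gg ?p" by (rule lower) (use pr p in auto)
    then have "(a+b)/2 * (ln 2 * uu ?p) \<le> (a+b)/2 * gg ?p" using p by (intro mult_left_mono) auto
    moreover have "(a+b)/2 * (ln 2 * uu ?p) = ln 2 * ((a+b) * uu ?p) / 2" by simp
    ultimately show ?thesis unfolding col_rel[OF a b p] by linarith
  qed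
  show "c2v a b \<le> (a+b)/2 * gg e + DD e * (KK a b/2 - (a+b)/2 * uu e)" if e: "0<e" "e \<le> 1/2"
    using cs
  proof cases
    case z then show ?thesis using z0[OF z] by (simp add: KK_def c2v_def)
  next
    case p
    have "gg ?p \<le> gg e + DD e * (uu ?p - uu e)" by (rule tangent) (use pr p e in auto)
    then have "(a+b)/2 * gg ?p \<le> (a+b)/2 * (gg e + DD e * (uu ?p - uu e))" using p by (intro mult_left_mono) auto
    moreover have "(a+b)/2 * (gg e + DD e * (uu ?p - uu e)) = (a+b)/2 * gg e + DD e * ((a+b) * uu ?p/2 - (a+b)/2 * uu e)"
      by (simp add: algebra_simps)
    ultimately show ?thesis unfolding col_rel[OF a b p] by linarith
  qed
  show "c2v a b = (a+b)/2 * gg 0" if K: "KK a b = (a+b)*ln 2"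
    using cs
  proof cases
    case z then show ?thesis using z0[OF z] by (simp add: KK_def c2v_def)
  next
    case p
    have "(a+b) * uu ?p = (a+b) * ln 2" using K unfolding col_rel[OF a b p] .
    then have "uu ?p = ln 2" using p by simp
    moreover then have "?p * (1 - ?p) = 0" by (intro uu_eq pr p)
    ultimately have "gg ?p = gg 0" unfolding gg0 gg_def[of ?p] by (simp; blast)
    then show ?thesis unfolding col_rel[OF a b p] by simp
  qed
qed


lemma vbec_lemma: "V_bec C = ((C * ln 2) * ln 2 - (C * ln 2)^2) / ln 2"
proof -
  have "- deriv (deriv (\<lambda>\<rho>. - log 2 (F_bec \<rho> C))) 0
      = (C * (ln 2 * ln 2) - ((\<lambda>\<rho>. C * (exp (- \<rho> * ln 2) * (- ln 2))) 0)^2) / ln 2"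
  proof (rule dlog[where F="\<lambda>\<rho>. 1 + (exp (- \<rho> * ln 2) - 1) * C"])
    show "(1::real)/2 > 0" by simp
    show "\<forall>x\<in>ball 0 (1/2). ((\<lambda>\<rho>. 1 + (exp (- \<rho> * ln 2) - 1) * C) has_real_derivative
            (\<lambda>\<rho>. C * (exp (- \<rho> * ln 2) * (- ln 2))) x) (at x)"
      by (auto intro!: derivative_eq_intros)
    show "((\<lambda>\<rho>. C * (exp (- \<rho> * ln 2) * (- ln 2))) has_real_derivative C * (ln 2 * ln 2)) (at 0)"
      by (auto intro!: derivative_eq_intros)
    show "1 + (exp (- 0 * ln 2) - 1) * C = 1" by simp
    show "\<forall>x\<in>ball 0 (1/2). - log 2 (F_bec x C) = - log 2 (1 + (exp (- x * ln 2) - 1) * C)"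
      by (simp add: F_bec_def powr_def)
  qed
  then show ?thesis unfolding V_bec_def by (simp add: power2_eq_square mult_ac)
qed

lemma vbsc_lemma: assumes e0: "0 \<le> e" "e \<le> 1"
  shows "- deriv (deriv (\<lambda>\<rho>. - log 2 (2 * cc e (1-e) \<rho>))) 0 = (gg e - (uu e)^2) / ln 2"
proof -
  have e0: "0 \<le> e" "0 \<le> 1 - e" using e0 by auto
  obtain d1 where d1: "\<forall>\<rho>\<in>ball 0 (1/2). (cc e (1-e) has_real_derivative d1 \<rho>) (at \<rho>)"
    "(d1 has_real_derivative c2v e (1-e)) (at 0)" "d1 0 = - KK e (1-e) / 2"
    using col[OF e0] by blast
  have "- deriv (deriv (\<lambda>\<rho>. - log 2 (2 * cc e (1-e) \<rho>))) 0 = (2 * c2v e (1-e) - ((\<lambda>\<rho>. 2 * d1 \<rho>) 0)^2) / ln 2"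
  proof (rule dlog[where F="\<lambda>\<rho>. 2 * cc e (1-e) \<rho>"])
    show "(1::real)/2 > 0" by simp
    show "\<forall>x\<in>ball 0 (1/2). ((\<lambda>\<rho>. 2 * cc e (1-e) \<rho>) has_real_derivative 2 * d1 x) (at x)"
      using d1 by (auto intro!: DERIV_cmult)
    show "((\<lambda>\<rho>. 2 * d1 \<rho>) has_real_derivative 2 * c2v e (1-e)) (at 0)"
      using d1 by (auto intro!: DERIV_cmult)
    show "2 * cc e (1-e) 0 = 1" using e0 by (simp add: cc0)
    show "\<forall>x\<in>ball 0 (1/2). - log 2 (2 * cc e (1-e) x) = - log 2 (2 * cc e (1-e) x)"
      by simp
  qed
  moreover have "KK e (1-e) = uu e" "c2v e (1-e) = gg e / 2"
    using col_rel[of e "1-e"] e0 by simp_all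
  ultimately show ?thesis using d1(3) by (simp add: power2_eq_square)
qed

lemma vbsc_lemma2: assumes "0 \<le> C" "C \<le> 1"
  shows "V_bsc C = (gg (bin_entropy_inv (1-C)) - (C * ln 2)^2) / ln 2"
proof -
  define e where "e = bin_entropy_inv (1-C)"
  have e: "0 \<le> e" "e \<le> 1/2" "uu e = C * ln 2" using bei[OF assms] by (simp_all add: e_def)
  have "V_bsc C = - deriv (deriv (\<lambda>\<rho>. - log 2 (2 * cc e (1-e) \<rho>))) 0"
    unfolding V_bsc_def Fbsc_eq e_def ..
  also have "\<dots> = (gg e - (uu e)^2) / ln 2" by (rule vbsc_lemma) (use e in auto)
  finally show ?thesis using e by (simp add: e_def)
qed

lemma disp_lemma: fixes W :: "bool \<Rightarrow> 'y::finite \<Rightarrow> real"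
  assumes W: "\<And>x y. 0 \<le> W x y" and nsum: "(\<Sum>y\<in>UNIV. (W False y + W True y) / 2) = 1"
  shows "dispersion W = ((\<Sum>y\<in>UNIV. c2v (W False y) (W True y)) - ((\<Sum>y\<in>UNIV. KK (W False y) (W True y)) / 2)^2) / ln 2"
proof -
  define a where "a y = W False y" for y
  define b where "b y = W True y" for y
  have a0: "0 \<le> a y" and b0: "0 \<le> b y" for y by (simp_all add: a_def b_def W)
  have "\<forall>y. \<exists>c1. (\<forall>\<rho>\<in>ball 0 (1/2). (cc (a y) (b y) has_real_derivative c1 \<rho>) (at \<rho>)) \<and>
             (c1 has_real_derivative c2v (a y) (b y)) (at 0) \<and> c1 0 = - KK (a y) (b y) / 2"
    using col a0 b0 by blast
  then obtain c1 where c1: "\<And>y. (\<forall>\<rho>\<in>ball 0 (1/2). (cc (a y) (b y) has_real_derivative c1 y \<rho>) (at \<rho>)) \<and>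
             (c1 y has_real_derivative c2v (a y) (b y)) (at 0) \<and> c1 y 0 = - KK (a y) (b y) / 2"
    by metis
  define X where "X = (\<Sum>y\<in>UNIV. KK (a y) (b y)) / 2"
  define F2 where "F2 = (\<Sum>y\<in>UNIV. c2v (a y) (b y))"
  have "- deriv (deriv (E0 W)) 0 = (F2 - ((\<lambda>\<rho>. \<Sum>y\<in>UNIV. c1 y \<rho>) 0)^2) / ln 2"
  proof (rule dlog[where F="\<lambda>\<rho>. \<Sum>y\<in>UNIV. cc (a y) (b y) \<rho>"])
    show "(1::real)/2 > 0" by simp
    show "\<forall>x\<in>ball 0 (1/2). ((\<lambda>\<rho>. \<Sum>y\<in>UNIV. cc (a y) (b y) \<rho>) has_real_derivative (\<Sum>y\<in>UNIV. c1 y x)) (at x)"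
      using c1 by (auto intro!: DERIV_sum)
    show "((\<lambda>\<rho>. \<Sum>y\<in>UNIV. c1 y \<rho>) has_real_derivative F2) (at 0)"
      unfolding F2_def using c1 by (auto intro!: DERIV_sum)
    show "(\<Sum>y\<in>UNIV. cc (a y) (b y) 0) = 1"
    proof -
      have "(\<Sum>y\<in>UNIV. cc (a y) (b y) 0) = (\<Sum>y\<in>UNIV. (W False y + W True y) / 2)"
        by (rule sum.cong[OF refl]) (simp add: cc0 W a_def b_def)
      then show ?thesis using nsum by simp
    qed
    show "\<forall>x\<in>ball 0 (1/2). E0 W x = - log 2 (\<Sum>y\<in>UNIV. cc (a y) (b y) x)"
    proof
      fix x :: real assume "x \<in> ball 0 (1/2)"
      then have "x > -1" by (auto simp: dist_real_def)
      then show "E0 W x = - log 2 (\<Sum>y\<in>UNIV. cc (a y) (b y) x)"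
        unfolding E0_def gallF_eq[OF W \<open>x > -1\<close>] a_def b_def by simp
    qed
  qed
  moreover have "(\<lambda>\<rho>. \<Sum>y\<in>UNIV. c1 y \<rho>) 0 = - X"
    using c1 by (simp add: X_def sum_negf sum_divide_distrib)
  ultimately show ?thesis by (simp add: dispersion_def F2_def X_def a_def b_def)
qed


theorem mainTheorem11:
  fixes W :: "bool \<Rightarrow> 'y::finite \<Rightarrow> real"
  assumes "bims W"
  shows "V_bec (capacity W) \<le> dispersion W \<and> dispersion W \<le> V_bsc (capacity W)"
proof -
  have W: "\<And>x y. 0 \<le> W x y" and sum1: "\<And>x. (\<Sum>y\<in>UNIV. W x y) = 1"
    using assms by (auto simp: bims_def channel_def)
  define a where "a y = W False y" for y
  define b where "b y = W True y" for y
  have a0: "0 \<le> a y" and b0: "0 \<le> b y" for y by (simp_all add: a_def b_def W)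
  have nsum: "(\<Sum>y\<in>UNIV. (a y + b y) / 2) = 1"
    using sum1[of False] sum1[of True]
    by (simp add: a_def b_def sum.distrib sum_divide_distrib[symmetric])
  have l2: "ln (2::real) > 0" by simp
  define X where "X = (\<Sum>y\<in>UNIV. KK (a y) (b y)) / 2"
  define F2 where "F2 = (\<Sum>y\<in>UNIV. c2v (a y) (b y))"
  have capX: "capacity W = X / ln 2"
    unfolding capacity_eq[OF W] X_def a_def b_def by simp
  have disp: "dispersion W = (F2 - X^2) / ln 2"
    using disp_lemma[OF W] nsum by (simp add: F2_def X_def a_def b_def)
  have KKb: "0 \<le> KK (a y) (b y)" "KK (a y) (b y) \<le> (a y + b y) * ln 2" for y
    using col_facts(1,2)[OF a0 b0] by auto
  have X0: "0 \<le> X" unfolding X_def using KKb by (auto intro!: sum_nonneg)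
  have Xl: "X \<le> ln 2"
  proof -
    have "(\<Sum>y\<in>UNIV. KK (a y) (b y)) \<le> (\<Sum>y\<in>UNIV. (a y + b y) * ln 2)"
      using KKb by (intro sum_mono) auto
    also have "\<dots> = (\<Sum>y\<in>UNIV. (2 * ln 2) * ((a y + b y) / 2))"
      by (rule sum.cong) auto
    also have "\<dots> = 2 * ln 2 * (\<Sum>y\<in>UNIV. (a y + b y) / 2)"
      by (rule sum_distrib_left[symmetric])
    finally show ?thesis using nsum by (simp add: X_def)
  qed
  define C where "C = capacity W"
  have C01: "0 \<le> C" "C \<le> 1" using X0 Xl l2 by (simp_all add: C_def capX)
  define e where "e = bin_entropy_inv (1-C)"
  have e: "0 \<le> e" "e \<le> 1/2" "uu e = X"
    using bei[OF C01] l2 by (simp_all add: e_def C_def capX)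
  have vbsc: "V_bsc C = (gg e - X^2) / ln 2"
    using vbsc_lemma2[OF C01] e by (simp add: e_def C_def capX)
  have vbec: "V_bec C = (X * ln 2 - X^2) / ln 2"
  proof -
    have "C * ln 2 = X" using l2 by (simp add: C_def capX)
    then show ?thesis using vbec_lemma[of C] by simp
  qed
  have lowF: "X * ln 2 \<le> F2"
  proof -
    have "X * ln 2 = (\<Sum>y\<in>UNIV. ln 2 * KK (a y) (b y) / 2)"
      by (simp add: X_def sum_distrib_left sum_divide_distrib mult.commute)
    also have "\<dots> \<le> F2" unfolding F2_def using col_facts(3)[OF a0 b0] by (intro sum_mono) auto
    finally show ?thesis .
  qed
  have upF: "F2 \<le> gg e"
  proof (cases "e = 0")
    case False
    then have ep: "0 < e" using e by simp
    have "F2 \<le> (\<Sum>y\<in>UNIV. (a y + b y)/2 * gg e + DD e * (KK (a y) (b y)/2 - (a y + b y)/2 * uu e))"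
      unfolding F2_def using col_facts(4)[OF a0 b0 ep e(2)] by (intro sum_mono) auto
    also have "\<dots> = gg e * (\<Sum>y\<in>UNIV. (a y + b y)/2) + DD e * ((\<Sum>y\<in>UNIV. KK (a y) (b y))/2 - (\<Sum>y\<in>UNIV. (a y + b y)/2) * uu e)"
    proof -
      have s1: "(\<Sum>y\<in>UNIV. KK (a y) (b y)/2 - (a y + b y)/2 * uu e) = (\<Sum>y\<in>UNIV. KK (a y) (b y))/2 - (\<Sum>y\<in>UNIV. (a y + b y)/2) * uu e"
        by (simp only: sum_subtractf sum_divide_distrib sum_distrib_right)
      have "(\<Sum>y\<in>UNIV. (a y + b y)/2 * gg e + DD e * (KK (a y) (b y)/2 - (a y + b y)/2 * uu e))
          = (\<Sum>y\<in>UNIV. gg e * ((a y + b y)/2)) + (\<Sum>y\<in>UNIV. DD e * (KK (a y) (b y)/2 - (a y + b y)/2 * uu e))"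
        by (simp only: sum.distrib mult.commute)
      also have "\<dots> = gg e * (\<Sum>y\<in>UNIV. (a y + b y)/2) + DD e * (\<Sum>y\<in>UNIV. KK (a y) (b y)/2 - (a y + b y)/2 * uu e)"
        by (simp only: sum_distrib_left)
      finally show ?thesis unfolding s1 .
    qed
    also have "\<dots> = gg e" using nsum e(3) by (simp add: X_def)
    finally show ?thesis .
  next
    case True
    then have X2: "X = ln 2" using e uu0 by simp
    have nn: "\<forall>y\<in>UNIV. 0 \<le> (a y + b y) * ln 2 - KK (a y) (b y)" using KKb by auto
    have ns2: "(\<Sum>y\<in>UNIV. a y + b y) = 2"
      using sum1[of False] sum1[of True] by (simp add: a_def b_def sum.distrib)
    have "(\<Sum>y\<in>UNIV. (a y + b y) * ln 2 - KK (a y) (b y)) = (\<Sum>y\<in>UNIV. a y + b y) * ln 2 - 2 * X"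
      by (simp only: sum_subtractf sum_distrib_right X_def)
    also have "\<dots> = 0" using ns2 X2 by simp
    finally have "\<forall>y\<in>UNIV. (a y + b y) * ln 2 - KK (a y) (b y) = 0"
      using sum_nonneg_eq_0_iff[of UNIV "\<lambda>y. (a y + b y) * ln 2 - KK (a y) (b y)"] nn by simp
    then have cz: "c2v (a y) (b y) = gg 0 * ((a y + b y)/2)" for y
      using col_facts(5)[OF a0 b0] by (auto simp: mult.commute)
    have "F2 = (\<Sum>y\<in>UNIV. gg 0 * ((a y + b y)/2))"
      unfolding F2_def cz ..
    also have "\<dots> = gg 0 * (\<Sum>y\<in>UNIV. (a y + b y)/2)" by (rule sum_distrib_left[symmetric])
    finally have "F2 = gg 0 * (\<Sum>y\<in>UNIV. (a y + b y)/2)" .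
    then show ?thesis using nsum True by simp
  qed
  have "V_bec C \<le> dispersion W" unfolding vbec disp using lowF l2
    by (intro divide_right_mono) auto
  moreover have "dispersion W \<le> V_bsc C" unfolding vbsc disp using upF l2
    by (intro divide_right_mono) auto
  ultimately show ?thesis by (simp add: C_def)
qed


end
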